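(* Let $A\in\mathbb{N}^{n\times m}$ have distinct columns. For $k\in[m]$ define $$C_{\mathrm{POLY\text{-}AGE}}(A,k)=\{c\in\mathbb{R}^m:\ \mathrm{Poly}(A,c)(x)\ge 0\ \forall x\in\mathbb{R}^n,\ c_i\ge 0\ \forall i\ne k,\ c_i=0\text{ for all } i\ne k\text{ with } a_i\notin(2\mathbb{N})^n\}.$$ Then $\sum_{k=1}^m C_{\mathrm{POLY\text{-}AGE}}(A,k)=C_{\mathrm{POLY\text{-}SAGE}}(A)$.
   Context: For $A\in\mathbb{N}^{n\times m}$ with distinct columns $a_i$ and $c\in\mathbb{R}^m$, $\mathrm{Poly}(A,c)$ is the polynomial $x\mapsto\sum_{i=1}^m c_i x^{a_i}$ on $\mathbb{R}^n$; a column $a_i$ is even if $a_i\in(2\mathbb{N})^n$. $\mathrm{Sig}(A,c)$ is $x\mapsto\sum_i c_i\exp(a_i^\top x)$; $C_{\mathrm{NNS}}(A)=\{c:\mathrm{Sig}(A,c)\ge 0\text{ on }\mathbb{R}^n\}$; $C_{\mathrm{AGE}}(A,k)=\{c\in C_{\mathrm{NNS}}(A): c_i\ge 0\ \forall i\ne k\}$; $C_{\mathrm{SAGE}}(A)=\sum_k C_{\mathrm{AGE}}(A,k)$. The signomial representative of $c$ is $\hat c\in\mathbb{R}^m$ with $\hat c_i=c_i$ if $a_i$ is even and $\hat c_i=-|c_i|$ otherwise; $C_{\mathrm{POLY\text{-}SAGE}}(A)=\{c\in\mathbb{R}^m:\hat c\in C_{\mathrm{SAGE}}(A)\}$. *)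

theory Defs
  imports Complex_Main
begin

text \<open>Exponent matrix A in N^(n x m) is modelled as A :: 'm => 'n => nat, where
  the finite type 'm indexes the columns (monomials) and the finite type 'n the
  variables; the column a_i is A i.\<close>

definition poly_fun :: "('m::finite \<Rightarrow> 'n::finite \<Rightarrow> nat) \<Rightarrow> ('m \<Rightarrow> real) \<Rightarrow> ('n \<Rightarrow> real) \<Rightarrow> real" where
  "poly_fun A c x = (\<Sum>i\<in>UNIV. c i * (\<Prod>j\<in>UNIV. x j ^ A i j))"

definition sig_fun :: "('m::finite \<Rightarrow> 'n::finite \<Rightarrow> nat) \<Rightarrow> ('m \<Rightarrow> real) \<Rightarrow> ('n \<Rightarrow> real) \<Rightarrow> real" where
  "sig_fun A c x = (\<Sum>i\<in>UNIV. c i * exp (\<Sum>j\<in>UNIV. real (A i j) * x j))"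

definition even_col :: "('m::finite \<Rightarrow> 'n::finite \<Rightarrow> nat) \<Rightarrow> 'm \<Rightarrow> bool" where
  "even_col A i \<longleftrightarrow> (\<forall>j. even (A i j))"

definition C_NNS :: "('m::finite \<Rightarrow> 'n::finite \<Rightarrow> nat) \<Rightarrow> ('m \<Rightarrow> real) set" where
  "C_NNS A = {c. \<forall>x. sig_fun A c x \<ge> 0}"

definition C_AGE :: "('m::finite \<Rightarrow> 'n::finite \<Rightarrow> nat) \<Rightarrow> 'm \<Rightarrow> ('m \<Rightarrow> real) set" where
  "C_AGE A k = {c \<in> C_NNS A. \<forall>i. i \<noteq> k \<longrightarrow> c i \<ge> 0}"

definition msum :: "('m::finite \<Rightarrow> ('v \<Rightarrow> real) set) \<Rightarrow> ('v \<Rightarrow> real) set" where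
  "msum C = {c. \<exists>f. (\<forall>k. f k \<in> C k) \<and> c = (\<lambda>i. \<Sum>k\<in>UNIV. f k i)}"

definition C_SAGE :: "('m::finite \<Rightarrow> 'n::finite \<Rightarrow> nat) \<Rightarrow> ('m \<Rightarrow> real) set" where
  "C_SAGE A = msum (C_AGE A)"

definition sig_rep :: "('m::finite \<Rightarrow> 'n::finite \<Rightarrow> nat) \<Rightarrow> ('m \<Rightarrow> real) \<Rightarrow> ('m \<Rightarrow> real)" where
  "sig_rep A c = (\<lambda>i. if even_col A i then c i else - \<bar>c i\<bar>)"

definition C_POLY_SAGE :: "('m::finite \<Rightarrow> 'n::finite \<Rightarrow> nat) \<Rightarrow> ('m \<Rightarrow> real) set" where
  "C_POLY_SAGE A = {c. sig_rep A c \<in> C_SAGE A}"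

definition C_POLY_AGE :: "('m::finite \<Rightarrow> 'n::finite \<Rightarrow> nat) \<Rightarrow> 'm \<Rightarrow> ('m \<Rightarrow> real) set" where
  "C_POLY_AGE A k = {c. (\<forall>x. poly_fun A c x \<ge> 0) \<and> (\<forall>i. i \<noteq> k \<longrightarrow> c i \<ge> 0)
                        \<and> (\<forall>i. i \<noteq> k \<and> \<not> even_col A i \<longrightarrow> c i = 0)}"

end

theory Submission
  imports Defs
begin

lemma sig_lin: "sig_fun A (\<lambda>j. a j + t * b j) y = sig_fun A a y + t * sig_fun A b y"
  unfolding sig_fun_def by (simp add: algebra_simps sum.distrib sum_distrib_left)

lemma sig_scale: "sig_fun A (\<lambda>j. t * b j) y = t * sig_fun A b y"
  unfolding sig_fun_def by (simp add: algebra_simps sum_distrib_left)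

lemma C_AGE_iff: "c \<in> C_AGE A k \<longleftrightarrow> (\<forall>x. 0 \<le> sig_fun A c x) \<and> (\<forall>i. i \<noteq> k \<longrightarrow> 0 \<le> c i)"
  unfolding C_AGE_def C_NNS_def by auto

lemma sig_pos:
  fixes A :: "'m::finite \<Rightarrow> 'n::finite \<Rightarrow> nat"
  assumes "\<forall>y. 0 \<le> sig_fun A f y" and "\<forall>j. z j > 0"
  shows "0 \<le> (\<Sum>i\<in>UNIV. f i * (\<Prod>j\<in>UNIV. z j ^ A i j))"
proof -
  have "\<And>i. (\<Prod>j\<in>UNIV. z j ^ A i j) = exp (\<Sum>j\<in>UNIV. real (A i j) * ln (z j))"
    using assms(2) by (simp add: exp_sum exp_of_nat_mult)
  then show ?thesis using assms(1)[rule_format, of "\<lambda>j. ln (z j)"]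
    by (simp add: sig_fun_def)
qed

lemma sig_abs:
  fixes A :: "'m::finite \<Rightarrow> 'n::finite \<Rightarrow> nat"
  assumes "\<forall>y. 0 \<le> sig_fun A f y"
  shows "0 \<le> (\<Sum>i\<in>UNIV. f i * (\<Prod>j\<in>UNIV. \<bar>x j\<bar> ^ A i j))"
proof -
  let ?Q = "\<lambda>t. (\<Sum>i\<in>UNIV. f i * (\<Prod>j\<in>UNIV. (\<bar>x j\<bar> + t) ^ A i j))"
  have "(?Q \<longlongrightarrow> ?Q 0) (at_right 0)"
    by (intro tendsto_intros)
  moreover have "eventually (\<lambda>t. 0 \<le> ?Q t) (at_right 0)"
    using eventually_at_right_less[of "0::real"]
  proof (rule eventually_mono)
    fix t :: real assume "0 < t"
    then have "\<forall>j. 0 < \<bar>x j\<bar> + t" by (simp add: add_nonneg_pos)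
    then show "0 \<le> ?Q t" using sig_pos[OF assms, of "\<lambda>j. \<bar>x j\<bar> + t"] by simp
  qed
  ultimately have "0 \<le> ?Q 0" by (intro tendsto_lowerbound) auto
  then show ?thesis by simp
qed

lemma step:
  fixes A :: "'m::finite \<Rightarrow> 'n::finite \<Rightarrow> nat" and g :: "'m \<Rightarrow> 'm \<Rightarrow> real"
  assumes g: "\<forall>k. g k \<in> C_AGE A k" and neg: "(\<Sum>k\<in>UNIV. g k i) \<le> 0"
  shows "\<exists>h. (\<forall>k. h k \<in> C_AGE A k) \<and> (\<forall>j. (\<Sum>k\<in>UNIV. h k j) = (\<Sum>k\<in>UNIV. g k j))
     \<and> (\<forall>k. k \<noteq> i \<longrightarrow> h k i = 0) \<and> (\<forall>j k. g i j = 0 \<longrightarrow> h k j = g k j)"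
proof -
  have gnn: "\<And>k j. k \<noteq> j \<Longrightarrow> 0 \<le> g k j" using g by (simp add: C_AGE_iff)
  have gsig: "\<And>k y. 0 \<le> sig_fun A (g k) y" using g by (simp add: C_AGE_iff)
  define p where "p = (\<Sum>k\<in>UNIV-{i}. g k i)"
  have split: "(\<Sum>k\<in>UNIV. g k i) = g i i + p"
    unfolding p_def by (simp add: sum.remove)
  have p0: "0 \<le> p" unfolding p_def by (rule sum_nonneg) (auto intro: gnn)
  have gii: "g i i \<le> - p" using neg split by simp
  define s where "s k = (if k = i then 0 else g k i / (- g i i))" for k
  define \<sigma> where "\<sigma> = (\<Sum>k\<in>UNIV. s k)"
  have s0: "\<And>k. 0 \<le> s k"
  proof -
    fix k
    have "0 \<le> - g i i" using gii p0 by simp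
    then have "k \<noteq> i \<Longrightarrow> 0 \<le> g k i / (- g i i)"
      using gnn[of k i] divide_nonneg_nonneg by blast
    then show "0 \<le> s k" unfolding s_def by (cases "k = i") auto
  qed
  have "\<sigma> = s i + (\<Sum>k\<in>UNIV-{i}. s k)" unfolding \<sigma>_def by (simp add: sum.remove)
  also have "\<dots> = (\<Sum>k\<in>UNIV-{i}. g k i / (- g i i))" unfolding s_def by simp
  also have "\<dots> = p / (- g i i)" unfolding p_def by (simp add: sum_divide_distrib sum_negf)
  finally have \<sigma>p: "\<sigma> = p / (- g i i)" .
  have \<sigma>1: "\<sigma> \<le> 1"
  proof (cases "g i i = 0")
    case True then show ?thesis using \<sigma>p by simp
  next
    case False then have "0 < - g i i" using gii p0 by simp
    then have "p / (- g i i) \<le> 1"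
      by (subst pos_divide_le_eq) (use gii in auto)
    then show ?thesis using \<sigma>p by metis
  qed
  have killed: "\<And>k. k \<noteq> i \<Longrightarrow> g k i + s k * g i i = 0"
  proof -
    fix k assume ki: "k \<noteq> i"
    show "g k i + s k * g i i = 0"
    proof (cases "g i i = 0")
      case True
      then have "p = 0" using gii p0 by simp
      moreover have "g k i \<le> p" unfolding p_def
        by (rule member_le_sum) (use ki gnn in auto)
      ultimately show ?thesis using gnn[OF ki] True by simp
    next
      case False then show ?thesis using ki by (simp add: s_def)
    qed
  qed
  define h where "h k j = g k j + s k * g i j - (if k = i then \<sigma> * g i j else 0)" for k j
  show ?thesis
  proof (intro exI[of _ h] conjI allI impI)
    fix k
    show "h k \<in> C_AGE A k"
    proof (cases "k = i")
      case True
      then have hk: "h k = (\<lambda>j. (1 - \<sigma>) * g i j)" unfolding h_def s_def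
        by (auto simp: algebra_simps)
      show ?thesis unfolding C_AGE_iff hk sig_scale
        using \<sigma>1 gsig gnn True by (auto intro!: mult_nonneg_nonneg)
    next
      case False
      then have hk: "h k = (\<lambda>j. g k j + s k * g i j)" unfolding h_def by auto
      have "\<forall>j. j \<noteq> k \<longrightarrow> 0 \<le> h k j"
      proof (intro allI impI)
        fix j assume jk: "j \<noteq> k"
        show "0 \<le> h k j"
        proof (cases "j = i")
          case True then show ?thesis using killed[OF False] hk by simp
        next
          case False2: False
          then show ?thesis using hk gnn[OF jk[symmetric]] gnn[of i j] s0[of k] by simp
        qed
      qed
      moreover have "\<forall>x. 0 \<le> sig_fun A (h k) x"
        unfolding hk sig_lin using gsig s0 by (simp add: add_nonneg_nonneg)
      ultimately show ?thesis unfolding C_AGE_iff by simp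
    qed
  next
    fix j
    show "(\<Sum>k\<in>UNIV. h k j) = (\<Sum>k\<in>UNIV. g k j)"
      unfolding h_def by (simp add: sum.distrib sum_subtractf sum_distrib_right[symmetric] \<sigma>_def[symmetric])
  next
    fix k assume "k \<noteq> i" then show "h k i = 0" using killed unfolding h_def by simp
  next
    fix j k assume "g i j = 0" then show "h k j = g k j" unfolding h_def by simp
  qed
qed

lemma clean:
  fixes A :: "'m::finite \<Rightarrow> 'n::finite \<Rightarrow> nat" and f :: "'m \<Rightarrow> 'm \<Rightarrow> real"
  assumes f: "\<forall>k. f k \<in> C_AGE A k" and neg: "\<forall>i\<in>S. (\<Sum>k\<in>UNIV. f k i) \<le> 0"
  shows "\<exists>g. (\<forall>k. g k \<in> C_AGE A k) \<and> (\<forall>j. (\<Sum>k\<in>UNIV. g k j) = (\<Sum>k\<in>UNIV. f k j))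
     \<and> (\<forall>i\<in>S. \<forall>k. k \<noteq> i \<longrightarrow> g k i = 0)"
proof -
  have "finite S" by simp
  then show ?thesis using neg
  proof (induction S rule: finite_induct)
    case empty then show ?case using f by auto
  next
    case (insert i S)
    then obtain g where g: "\<forall>k. g k \<in> C_AGE A k"
      and gs: "\<forall>j. (\<Sum>k\<in>UNIV. g k j) = (\<Sum>k\<in>UNIV. f k j)"
      and gc: "\<forall>i\<in>S. \<forall>k. k \<noteq> i \<longrightarrow> g k i = 0" by auto
    have "(\<Sum>k\<in>UNIV. g k i) \<le> 0" using gs insert.prems by simp
    from step[OF g this] obtain h where h: "\<forall>k. h k \<in> C_AGE A k"
      and hs: "\<forall>j. (\<Sum>k\<in>UNIV. h k j) = (\<Sum>k\<in>UNIV. g k j)"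
      and hi: "\<forall>k. k \<noteq> i \<longrightarrow> h k i = 0" and hp: "\<forall>j k. g i j = 0 \<longrightarrow> h k j = g k j"
      by blast
    have "\<forall>j\<in>insert i S. \<forall>k. k \<noteq> j \<longrightarrow> h k j = 0"
    proof (intro ballI allI impI)
      fix j k assume j: "j \<in> insert i S" and kj: "k \<noteq> j"
      show "h k j = 0"
      proof (cases "j = i")
        case True then show ?thesis using hi kj by simp
      next
        case False
        then have jS: "j \<in> S" using j by simp
        then have "i \<noteq> j" using insert.hyps by auto
        then have "g i j = 0" using gc jS by auto
        then show ?thesis using hp gc jS kj by auto
      qed
    qed
    then show ?case using h hs gs by auto
  qed
qed

lemma prod_even_abs:
  fixes A :: "'m::finite \<Rightarrow> 'n::finite \<Rightarrow> nat" and x :: "'n \<Rightarrow> real"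
  assumes "even_col A i"
  shows "(\<Prod>j\<in>UNIV. x j ^ A i j) = (\<Prod>j\<in>UNIV. \<bar>x j\<bar> ^ A i j)"
proof (intro prod.cong refl)
  fix j
  have "even (A i j)" using assms by (simp add: even_col_def)
  then show "x j ^ A i j = \<bar>x j\<bar> ^ A i j" by (rule power_even_abs[symmetric])
qed

lemma poly_from_age:
  fixes A :: "'m::finite \<Rightarrow> 'n::finite \<Rightarrow> nat"
  assumes f: "f \<in> C_AGE A k" and z: "\<forall>i. i \<noteq> k \<and> \<not> even_col A i \<longrightarrow> f i = 0"
    and d: "if even_col A k then d = f k else f k = - \<bar>d\<bar>"
  shows "0 \<le> poly_fun A (f(k := d)) x"
proof -
  have "0 \<le> (\<Sum>i\<in>UNIV. f i * (\<Prod>j\<in>UNIV. \<bar>x j\<bar> ^ A i j))"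
    using f by (intro sig_abs) (simp add: C_AGE_iff)
  also have "\<dots> \<le> (\<Sum>i\<in>UNIV. (f(k := d)) i * (\<Prod>j\<in>UNIV. x j ^ A i j))"
  proof (rule sum_mono)
    fix i :: 'm
    show "f i * (\<Prod>j\<in>UNIV. \<bar>x j\<bar> ^ A i j) \<le> (f(k := d)) i * (\<Prod>j\<in>UNIV. x j ^ A i j)"
    proof (cases "even_col A i")
      case True
      then show ?thesis using d prod_even_abs[OF True, of x] by (cases "i = k") auto
    next
      case False
      show ?thesis
      proof (cases "i = k")
        case True
        let ?P = "(\<Prod>j\<in>UNIV. x j ^ A i j)"
        have P: "\<bar>?P\<bar> = (\<Prod>j\<in>UNIV. \<bar>x j\<bar> ^ A i j)" by (simp add: abs_prod power_abs)
        have "- \<bar>d * ?P\<bar> \<le> d * ?P" by simp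
        then have "- \<bar>d\<bar> * \<bar>?P\<bar> \<le> d * ?P" by (simp add: abs_mult)
        then show ?thesis using True False d P by simp
      next
        case False2: False
        then show ?thesis using z False by simp
      qed
    qed
  qed
  finally show ?thesis unfolding poly_fun_def .
qed

lemma sig_from_poly:
  fixes A :: "'m::finite \<Rightarrow> 'n::finite \<Rightarrow> nat"
  assumes g: "g \<in> C_POLY_AGE A k"
  shows "(\<lambda>i. if i = k \<and> \<not> even_col A k then - \<bar>g k\<bar> else g i) \<in> C_AGE A k"
    (is "?F \<in> _")
proof -
  have gnn: "\<And>i. i \<noteq> k \<Longrightarrow> 0 \<le> g i" and gz: "\<And>i. i \<noteq> k \<Longrightarrow> \<not> even_col A i \<Longrightarrow> g i = 0"
    and gp: "\<And>x. 0 \<le> poly_fun A g x" using g by (auto simp: C_POLY_AGE_def)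
  obtain j0 where j0: "\<not> even_col A k \<longrightarrow> odd (A k j0)" unfolding even_col_def by auto
  define sg :: real where "sg = (if \<not> even_col A k \<and> g k > 0 then -1 else 1)"
  have sg1: "sg = 1 \<or> sg = -1" unfolding sg_def by auto
  have "0 \<le> sig_fun A ?F y" for y
  proof -
    define x where "x j = (if j = j0 then sg else 1) * exp (y j)" for j
    have prodx: "(\<Prod>j\<in>UNIV. x j ^ A i j) = sg ^ A i j0 * exp (\<Sum>j\<in>UNIV. real (A i j) * y j)" for i
    proof -
      have "(\<Prod>j\<in>UNIV. x j ^ A i j) = (\<Prod>j\<in>UNIV. (if j = j0 then sg ^ A i j else 1) * exp (y j) ^ A i j)"
        unfolding x_def by (intro prod.cong) (auto simp: power_mult_distrib)
      also have "\<dots> = sg ^ A i j0 * (\<Prod>j\<in>UNIV. exp (y j) ^ A i j)"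
        by (subst prod.distrib) (simp only: prod.delta finite UNIV_I if_True)
      also have "(\<Prod>j\<in>UNIV. exp (y j) ^ A i j) = exp (\<Sum>j\<in>UNIV. real (A i j) * y j)"
        by (simp add: exp_sum exp_of_nat_mult)
      finally show ?thesis .
    qed
    have trm: "g i * sg ^ A i j0 = ?F i" for i
    proof (cases "even_col A i")
      case True
      then have "even (A i j0)" by (simp add: even_col_def)
      then have "sg ^ A i j0 = 1" using sg1 by (metis power_one neg_one_even_power)
      then show ?thesis using True by auto
    next
      case False
      show ?thesis
      proof (cases "i = k")
        case True
        then have "odd (A i j0)" using j0 False by simp
        then have "sg ^ A i j0 = sg" using sg1 by (metis power_one neg_one_odd_power)
        then show ?thesis using True False unfolding sg_def by auto
      next
        case False2: False
        then show ?thesis using gz False by simp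
      qed
    qed
    have "poly_fun A g x = sig_fun A ?F y"
      unfolding poly_fun_def sig_fun_def prodx
    proof (intro sum.cong refl)
      fix i
      have "g i * (sg ^ A i j0 * exp (\<Sum>j\<in>UNIV. real (A i j) * y j))
          = (g i * sg ^ A i j0) * exp (\<Sum>j\<in>UNIV. real (A i j) * y j)" by (simp only: mult.assoc)
      then show "g i * (sg ^ A i j0 * exp (\<Sum>j\<in>UNIV. real (A i j) * y j))
          = ?F i * exp (\<Sum>j\<in>UNIV. real (A i j) * y j)" by (simp only: trm)
    qed
    then show ?thesis using gp[of x] by simp
  qed
  moreover have "\<forall>i. i \<noteq> k \<longrightarrow> 0 \<le> ?F i" using gnn by auto
  ultimately show ?thesis unfolding C_AGE_iff by auto
qed

theorem mainTheorem16:
  fixes A :: "'m::finite \<Rightarrow> 'n::finite \<Rightarrow> nat"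
  assumes "inj A"
  shows "msum (C_POLY_AGE A) = C_POLY_SAGE A"
proof
  show "msum (C_POLY_AGE A) \<subseteq> C_POLY_SAGE A"
  proof
    fix c assume "c \<in> msum (C_POLY_AGE A)"
    then obtain g where g: "\<And>k. g k \<in> C_POLY_AGE A k" and c: "c = (\<lambda>i. \<Sum>k\<in>UNIV. g k i)"
      unfolding msum_def by auto
    have gz: "\<And>k i. i \<noteq> k \<Longrightarrow> \<not> even_col A i \<Longrightarrow> g k i = 0"
      using g unfolding C_POLY_AGE_def by blast
    define F where "F k = (\<lambda>i. if i = k \<and> \<not> even_col A k then - \<bar>g k k\<bar> else g k i)" for k
    have F: "\<And>k. F k \<in> C_AGE A k" unfolding F_def by (rule sig_from_poly[OF g])
    have "sig_rep A c = (\<lambda>i. \<Sum>k\<in>UNIV. F k i)"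
    proof
      fix i
      show "sig_rep A c i = (\<Sum>k\<in>UNIV. F k i)"
      proof (cases "even_col A i")
        case True
        have "(\<lambda>k. F k i) = (\<lambda>k. g k i)" using True unfolding F_def by auto
        then have "(\<Sum>k\<in>UNIV. F k i) = (\<Sum>k\<in>UNIV. g k i)" by (rule arg_cong[where f="\<lambda>h. sum h UNIV"])
        then show ?thesis using True unfolding sig_rep_def c by simp
      next
        case False
        have e1: "(\<lambda>k. g k i) = (\<lambda>k. if k = i then g i i else 0)" using gz False by auto
        have e2: "(\<lambda>k. F k i) = (\<lambda>k. if k = i then - \<bar>g i i\<bar> else 0)"
          unfolding F_def using gz False by auto
        have s1: "(\<Sum>k\<in>UNIV. g k i) = g i i" unfolding e1 by simp
        have s2: "(\<Sum>k\<in>UNIV. F k i) = - \<bar>g i i\<bar>" unfolding e2 by simp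
        show ?thesis unfolding sig_rep_def c s1 s2 using False by simp
      qed
    qed
    then show "c \<in> C_POLY_SAGE A" unfolding C_POLY_SAGE_def C_SAGE_def msum_def
      using F by blast
  qed
next
  show "C_POLY_SAGE A \<subseteq> msum (C_POLY_AGE A)"
  proof
    fix c assume "c \<in> C_POLY_SAGE A"
    then obtain f where f: "\<forall>k. f k \<in> C_AGE A k" and fs: "sig_rep A c = (\<lambda>i. \<Sum>k\<in>UNIV. f k i)"
      unfolding C_POLY_SAGE_def C_SAGE_def msum_def by blast
    have fsi: "\<And>i. (\<Sum>k\<in>UNIV. f k i) = sig_rep A c i" using fs by simp
    have "\<forall>i\<in>{i. \<not> even_col A i}. (\<Sum>k\<in>UNIV. f k i) \<le> 0"
      unfolding fsi by (simp add: sig_rep_def)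
    from clean[OF f this] obtain g where g: "\<forall>k. g k \<in> C_AGE A k"
      and gs: "\<forall>j. (\<Sum>k\<in>UNIV. g k j) = (\<Sum>k\<in>UNIV. f k j)"
      and gc: "\<forall>i\<in>{i. \<not> even_col A i}. \<forall>k. k \<noteq> i \<longrightarrow> g k i = 0" by blast
    have gsum: "\<And>i. (\<Sum>k\<in>UNIV. g k i) = sig_rep A c i" using gs fsi by simp
    have gc': "\<And>i k. \<not> even_col A i \<Longrightarrow> k \<noteq> i \<Longrightarrow> g k i = 0" using gc by blast
    have godd: "\<And>i. \<not> even_col A i \<Longrightarrow> g i i = - \<bar>c i\<bar>"
    proof -
      fix i assume o: "\<not> even_col A i"
      have e: "(\<lambda>k. g k i) = (\<lambda>k. if k = i then g i i else 0)" using gc' o by auto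
      have "(\<Sum>k\<in>UNIV. g k i) = g i i" unfolding e by simp
      then show "g i i = - \<bar>c i\<bar>" using gsum[of i] o by (simp add: sig_rep_def)
    qed
    define G where "G k = (g k)(k := (if even_col A k then g k k else c k))" for k
    have G: "G k \<in> C_POLY_AGE A k" for k
    proof -
      have p1: "g k \<in> C_AGE A k" using g by blast
      have p2: "\<forall>i. i \<noteq> k \<and> \<not> even_col A i \<longrightarrow> g k i = 0" using gc' by auto
      have p3: "if even_col A k then (if even_col A k then g k k else c k) = g k k
                else g k k = - \<bar>if even_col A k then g k k else c k\<bar>"
        using godd[of k] by simp
      have "0 \<le> poly_fun A (G k) x" for x unfolding G_def
        by (rule poly_from_age[OF p1 p2 p3])
      moreover have "\<forall>i. i \<noteq> k \<longrightarrow> 0 \<le> G k i" using p1 unfolding G_def C_AGE_iff by simp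
      moreover have "\<forall>i. i \<noteq> k \<and> \<not> even_col A i \<longrightarrow> G k i = 0" using p2 unfolding G_def by simp
      ultimately show ?thesis unfolding C_POLY_AGE_def by blast
    qed
    have "c = (\<lambda>i. \<Sum>k\<in>UNIV. G k i)"
    proof
      fix i
      show "c i = (\<Sum>k\<in>UNIV. G k i)"
      proof (cases "even_col A i")
        case True
        have "(\<lambda>k. G k i) = (\<lambda>k. g k i)" using True unfolding G_def by auto
        then have "(\<Sum>k\<in>UNIV. G k i) = (\<Sum>k\<in>UNIV. g k i)" by (rule arg_cong[where f="\<lambda>h. sum h UNIV"])
        then show ?thesis using gsum[of i] True by (simp add: sig_rep_def)
      next
        case False
        have "(\<lambda>k. G k i) = (\<lambda>k. if k = i then c i else 0)" using gc' False unfolding G_def by auto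
        then have "(\<Sum>k\<in>UNIV. G k i) = (\<Sum>k\<in>UNIV. if k = i then c i else 0)"
          by (rule arg_cong[where f="\<lambda>h. sum h UNIV"])
        then show ?thesis by simp
      qed
    qed
    then show "c \<in> msum (C_POLY_AGE A)" unfolding msum_def using G by blast
  qed
qed

end
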